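(* Suppose $\mathcal I_{CAS}=\langle\mathcal I,\chi\rangle$ is a justified CAS-model of a DL-Lite$_R$ DKB $\mathcal K'$. Then $\mathcal I_{CAS}$ is not necessarily a justified CAS-model of every $\mathcal K\subset\mathcal K'$; that is, there exist a DKB $\mathcal K'$, a justified CAS-model $\mathcal I_{CAS}$ of $\mathcal K'$ and a DKB $\mathcal K\subset\mathcal K'$ such that $\mathcal I_{CAS}$ is not a justified CAS-model of $\mathcal K$.
   Context: DL-Lite$_R$: pairwise disjoint countably infinite sets $\mathrm{NC}$, $\mathrm{NR}$, $\mathrm{NI}$; a role is $R$ or $R^-$; concepts $C ::= A\mid\exists R$ (left), $D ::= A\mid\neg C\mid\exists R$ (right). Axioms: $C\sqsubseteq D$, $S\sqsubseteq R$, $\mathrm{Dis}(R,S)$, $\mathrm{Inv}(R,S)$, $\mathrm{Irr}(R)$ (no reflexivity), assertions $D(a)$, $R(a,b)$, usual semantics. Standard name assumption: an infinite set $\mathrm{NI}_S\subseteq\mathrm{NI}$ of standard names is the domain of every interpretation, $c^{\mathcal I}=c$ for $c\in\mathrm{NI}_S$. Axioms are identified with universal first-order sentences $\forall\vec x\,\phi_\alpha(\vec x)$ via the standard translation with right-hand existentials Skolemized by a unary Skolem function $f_R$ per atomic role; $\alpha(\vec e):=\phi_\alpha(\vec e)$. A DKB is a finite set of DL-Lite$_R$ axioms and defeasible axioms $\mathrm D(\alpha)$. Clashing assumption $\langle\alpha,\vec e\rangle$; clashing set: satisfiable set $S$ of assertions and negated assertions with $S\cup\{\alpha(\vec e)\}$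 unsatisfiable. $\langle\mathcal I,\chi\rangle$ ($\chi$ a set of clashing assumptions) is a CAS-model of $\mathcal K$ if $\mathcal I$ satisfies the non-defeasible axioms of $\mathcal K$ and $\mathcal I\models\phi_\alpha(\vec d)$ for all $\mathrm D(\alpha)\in\mathcal K$ and tuples $\vec d$ with $\langle\alpha,\vec d\rangle\notin\chi$. NI-congruent: same interpretation of all constants in $\mathrm{NI}$. $\langle\alpha,\vec e\rangle\in\chi$ is justified if some clashing set for it holds in every CAS-model $\langle\mathcal I',\chi\rangle$ of $\mathcal K$ NI-congruent to $\langle\mathcal I,\chi\rangle$; a CAS-model is justified if all its clashing assumptions are justified. *)

theory Defs
  imports Main "HOL-Library.Countable"
begin

section \<open>Syntax of DL-Lite_R (NC = 'c, NR = 'r, NI = 'i)\<close>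

datatype 'r role = Atom 'r | Inv 'r

datatype ('c,'r) lconcept = LA 'c | LEx "'r role"

datatype ('c,'r) rconcept = RA 'c | RNeg "('c,'r) lconcept" | REx "'r role"

datatype ('c,'r,'i) axiom =
    CInc "('c,'r) lconcept" "('c,'r) rconcept"
  | RInc "'r role" "'r role"
  | DisAx "'r role" "'r role"
  | InvAx "'r role" "'r role"
  | IrrAx "'r role"
  | CAs "('c,'r) rconcept" 'i
  | RAs "'r role" 'i 'i

text \<open>A DKB is a finite set of (strict) axioms and defeasible axioms D(alpha).\<close>
datatype ('c,'r,'i) kaxiom = Strict "('c,'r,'i) axiom" | Def "('c,'r,'i) axiom"

datatype ('c,'r,'i) assertion = CAss "('c,'r) rconcept" 'i | RAss "'r role" 'i 'i

type_synonym ('c,'r,'i) literal = "bool \<times> ('c,'r,'i) assertion"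

text \<open>An interpretation also interprets the Skolem functions (one unary
  function per role).  Its domain is the set NS of standard names.\<close>
record ('c,'r,'i) interp =
  conc :: "'c \<Rightarrow> 'i set"
  rol  :: "'r \<Rightarrow> ('i \<times> 'i) set"
  cst  :: "'i \<Rightarrow> 'i"
  sk   :: "'r role \<Rightarrow> 'i \<Rightarrow> 'i"

definition is_interp :: "'i set \<Rightarrow> ('c,'r,'i) interp \<Rightarrow> bool" where
  "is_interp NS I \<longleftrightarrow>
     (\<forall>A. conc I A \<subseteq> NS) \<and> (\<forall>R. rol I R \<subseteq> NS \<times> NS) \<and>
     (\<forall>a. cst I a \<in> NS) \<and> (\<forall>c\<in>NS. cst I c = c) \<and>
     (\<forall>R. \<forall>d\<in>NS. sk I R d \<in> NS)"

fun rsem :: "('c,'r,'i) interp \<Rightarrow> 'r role \<Rightarrow> ('i \<times> 'i) set" where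
  "rsem I (Atom r) = rol I r"
| "rsem I (Inv r) = (rol I r)\<inverse>"

fun lvars :: "('c,'r) lconcept \<Rightarrow> nat" where
  "lvars (LA _) = 0" | "lvars (LEx _) = 1"

fun rvars :: "('c,'r) rconcept \<Rightarrow> nat" where
  "rvars (RA _) = 0" | "rvars (REx _) = 0" | "rvars (RNeg C) = lvars C"

fun arity :: "('c,'r,'i) axiom \<Rightarrow> nat" where
  "arity (CInc C D) = 1 + lvars C + rvars D"
| "arity (RInc R S) = 2"
| "arity (DisAx R S) = 2"
| "arity (InvAx R S) = 2"
| "arity (IrrAx R) = 1"
| "arity (CAs D a) = rvars D"
| "arity (RAs R a b) = 0"

text \<open>Left concept as antecedent atom C(x) (with extra universal variable for
  an existential); right concept as consequent, existentials Skolemized.\<close>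
fun lhold :: "('c,'r,'i) interp \<Rightarrow> ('c,'r) lconcept \<Rightarrow> 'i \<Rightarrow> 'i list \<Rightarrow> bool" where
  "lhold I (LA A) x ys = (x \<in> conc I A)"
| "lhold I (LEx R) x ys = ((x, hd ys) \<in> rsem I R)"

fun rhold :: "('c,'r,'i) interp \<Rightarrow> ('c,'r) rconcept \<Rightarrow> 'i \<Rightarrow> 'i list \<Rightarrow> bool" where
  "rhold I (RA A) x zs = (x \<in> conc I A)"
| "rhold I (REx R) x zs = ((x, sk I R x) \<in> rsem I R)"
| "rhold I (RNeg C) x zs = (\<not> lhold I C x zs)"

text \<open>inst I alpha ds: I satisfies phi_alpha(ds) (ds of length arity alpha).\<close>
fun inst :: "('c,'r,'i) interp \<Rightarrow> ('c,'r,'i) axiom \<Rightarrow> 'i list \<Rightarrow> bool" where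
  "inst I (CInc C D) ds =
     (lhold I C (hd ds) (take (lvars C) (tl ds)) \<longrightarrow>
      rhold I D (hd ds) (drop (lvars C) (tl ds)))"
| "inst I (RInc R S) ds = ((ds!0, ds!1) \<in> rsem I R \<longrightarrow> (ds!0, ds!1) \<in> rsem I S)"
| "inst I (DisAx R S) ds = (\<not> ((ds!0, ds!1) \<in> rsem I R \<and> (ds!0, ds!1) \<in> rsem I S))"
| "inst I (InvAx R S) ds = ((ds!0, ds!1) \<in> rsem I R \<longleftrightarrow> (ds!1, ds!0) \<in> rsem I S)"
| "inst I (IrrAx R) ds = ((ds!0, ds!0) \<notin> rsem I R)"
| "inst I (CAs D a) ds = rhold I D (cst I a) ds"
| "inst I (RAs R a b) ds = ((cst I a, cst I b) \<in> rsem I R)"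

definition tuples :: "'i set \<Rightarrow> ('c,'r,'i) axiom \<Rightarrow> 'i list set" where
  "tuples NS \<alpha> = {ds. length ds = arity \<alpha> \<and> set ds \<subseteq> NS}"

definition holds_ax :: "'i set \<Rightarrow> ('c,'r,'i) interp \<Rightarrow> ('c,'r,'i) axiom \<Rightarrow> bool" where
  "holds_ax NS I \<alpha> \<longleftrightarrow> (\<forall>ds\<in>tuples NS \<alpha>. inst I \<alpha> ds)"

fun lext :: "('c,'r,'i) interp \<Rightarrow> ('c,'r) lconcept \<Rightarrow> 'i set" where
  "lext I (LA A) = conc I A"
| "lext I (LEx R) = Domain (rsem I R)"

fun rext :: "'i set \<Rightarrow> ('c,'r,'i) interp \<Rightarrow> ('c,'r) rconcept \<Rightarrow> 'i set" where
  "rext NS I (RA A) = conc I A"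
| "rext NS I (REx R) = Domain (rsem I R)"
| "rext NS I (RNeg C) = NS - lext I C"

fun ass_holds :: "'i set \<Rightarrow> ('c,'r,'i) interp \<Rightarrow> ('c,'r,'i) assertion \<Rightarrow> bool" where
  "ass_holds NS I (CAss D a) = (cst I a \<in> rext NS I D)"
| "ass_holds NS I (RAss R a b) = ((cst I a, cst I b) \<in> rsem I R)"

definition lit_holds :: "'i set \<Rightarrow> ('c,'r,'i) interp \<Rightarrow> ('c,'r,'i) literal \<Rightarrow> bool" where
  "lit_holds NS I l \<longleftrightarrow> (if fst l then ass_holds NS I (snd l) else \<not> ass_holds NS I (snd l))"

definition satisfiable :: "'i set \<Rightarrow> ('c,'r,'i) literal set \<Rightarrow> bool" where
  "satisfiable NS S \<longleftrightarrow> (\<exists>I. is_interp NS I \<and> (\<forall>l\<in>S. lit_holds NS I l))"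

definition clashing_set :: "'i set \<Rightarrow> ('c,'r,'i) literal set \<Rightarrow> ('c,'r,'i) axiom \<Rightarrow> 'i list \<Rightarrow> bool" where
  "clashing_set NS S \<alpha> e \<longleftrightarrow>
     e \<in> tuples NS \<alpha> \<and> satisfiable NS S \<and>
     \<not> (\<exists>I. is_interp NS I \<and> (\<forall>l\<in>S. lit_holds NS I l) \<and> inst I \<alpha> e)"

definition cas_model :: "'i set \<Rightarrow> ('c,'r,'i) kaxiom set \<Rightarrow> ('c,'r,'i) interp
    \<Rightarrow> (('c,'r,'i) axiom \<times> 'i list) set \<Rightarrow> bool" where
  "cas_model NS K I \<chi> \<longleftrightarrow>
     is_interp NS I \<and>
     (\<forall>\<alpha>. Strict \<alpha> \<in> K \<longrightarrow> holds_ax NS I \<alpha>) \<and>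
     (\<forall>\<alpha> ds. Def \<alpha> \<in> K \<and> ds \<in> tuples NS \<alpha> \<and> (\<alpha>, ds) \<notin> \<chi> \<longrightarrow> inst I \<alpha> ds)"

definition justified_cas :: "'i set \<Rightarrow> ('c,'r,'i) kaxiom set \<Rightarrow> ('c,'r,'i) interp
    \<Rightarrow> (('c,'r,'i) axiom \<times> 'i list) set \<Rightarrow> bool" where
  "justified_cas NS K I \<chi> \<longleftrightarrow>
     cas_model NS K I \<chi> \<and>
     (\<forall>(\<alpha>, e)\<in>\<chi>. \<exists>S. clashing_set NS S \<alpha> e \<and>
        (\<forall>I'. cas_model NS K I' \<chi> \<and> cst I' = cst I \<longrightarrow> (\<forall>l\<in>S. lit_holds NS I' l)))"

end

theory Submission
  imports Defs
begin

theorem proposition4: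
  fixes NS :: "'i::countable set"
  assumes "infinite (UNIV :: 'c::countable set)"
    and "infinite (UNIV :: 'r::countable set)"
    and "infinite (UNIV :: 'i set)"
    and "infinite NS"
  shows "\<exists>(K' :: ('c,'r,'i) kaxiom set) K I \<chi>.
           finite K' \<and> K \<subset> K' \<and> justified_cas NS K' I \<chi> \<and> \<not> justified_cas NS K I \<chi>"
proof -
  obtain A B :: 'c where AB: "A \<noteq> B"
    using assms(1) by (metis finite.simps UNIV_eq_I insertI1 empty_iff finite_insert)
  obtain a where aN: "a \<in> NS" using assms(4) by (metis ex_in_conv finite.emptyI)
  define \<alpha> :: "('c,'r,'i) axiom" where "\<alpha> = CInc (LA A) (RA B)"
  define K :: "('c,'r,'i) kaxiom set" where "K = {Strict (CAs (RA A) a), Def \<alpha>}"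
  define K' where "K' = insert (Strict (CAs (RNeg (LA B)) a)) K"
  define I :: "('c,'r,'i) interp" where
    "I = \<lparr>conc = (\<lambda>C. if C = A then {a} else {}), rol = (\<lambda>_. {}),
          cst = (\<lambda>x. if x \<in> NS then x else a), sk = (\<lambda>_ d. if d \<in> NS then d else a)\<rparr>"
  define I2 :: "('c,'r,'i) interp" where
    "I2 = I\<lparr>conc := (\<lambda>C. if C = A \<or> C = B then {a} else {})\<rparr>"
  define \<chi> where "\<chi> = {(\<alpha>, [a])}"
  have tup: "ds \<in> tuples NS \<alpha> \<longleftrightarrow> (\<exists>d\<in>NS. ds = [d])" for ds
    by (auto simp: tuples_def \<alpha>_def length_Suc_conv)
  have tup0: "tuples NS (CAs D a) = {[]}" if "rvars D = 0" for D :: "('c,'r) rconcept"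
    using that by (auto simp: tuples_def)
  have isI: "is_interp NS I" using aN by (auto simp: is_interp_def I_def)
  have isI2: "is_interp NS I2" using aN by (auto simp: is_interp_def I_def I2_def)
  have cI: "cst I a = a" using aN by (simp add: I_def)
  have cI2: "cst I2 = cst I" by (simp add: I2_def)
  have defI: "inst J \<alpha> ds" if "ds \<in> tuples NS \<alpha>" "ds \<noteq> [a]"
      "\<forall>x. x \<in> conc J A \<longrightarrow> x = a" for J :: "('c,'r,'i) interp" and ds
  proof -
    have "\<exists>d\<in>NS. ds = [d]" using tup[of ds] that(1) by (rule iffD1)
    then obtain d where d: "ds = [d]" by (elim bexE)
    then have "d \<noteq> a" using that(2) by simp
    then have "d \<notin> conc J A" using that(3) by blast
    then show ?thesis unfolding d \<alpha>_def by simp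
  qed
  have mK': "cas_model NS K' I \<chi>"
    unfolding cas_model_def
  proof (intro conjI isI allI impI)
    fix \<beta> assume "Strict \<beta> \<in> K'"
    then have "\<beta> = CAs (RA A) a \<or> \<beta> = CAs (RNeg (LA B)) a" by (auto simp: K'_def K_def)
    then show "holds_ax NS I \<beta>" using AB cI by (auto simp: holds_ax_def tup0 I_def)
  next
    fix \<beta> ds assume h: "Def \<beta> \<in> K' \<and> ds \<in> tuples NS \<beta> \<and> (\<beta>, ds) \<notin> \<chi>"
    then have "\<beta> = \<alpha>" by (auto simp: K'_def K_def)
    moreover have "ds \<noteq> [a]" using h \<open>\<beta> = \<alpha>\<close> by (auto simp: \<chi>_def)
    moreover have "\<forall>x. x \<in> conc I A \<longrightarrow> x = a" by (simp add: I_def)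
    ultimately show "inst I \<beta> ds" using h defI[of ds I] by simp
  qed
  have mK2: "cas_model NS K I2 \<chi>"
    unfolding cas_model_def
  proof (intro conjI isI2 allI impI)
    fix \<beta> assume "Strict \<beta> \<in> K"
    then have "\<beta> = CAs (RA A) a" by (auto simp: K_def)
    then show "holds_ax NS I2 \<beta>" using AB cI cI2 by (auto simp: holds_ax_def tup0 I2_def I_def)
  next
    fix \<beta> ds assume h: "Def \<beta> \<in> K \<and> ds \<in> tuples NS \<beta> \<and> (\<beta>, ds) \<notin> \<chi>"
    then have "\<beta> = \<alpha>" by (auto simp: K_def)
    moreover have "ds \<noteq> [a]" using h \<open>\<beta> = \<alpha>\<close> by (auto simp: \<chi>_def)
    moreover have "\<forall>x. x \<in> conc I2 A \<longrightarrow> x = a" by (simp add: I2_def I_def)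
    ultimately show "inst I2 \<beta> ds" using h defI[of ds I2] by simp
  qed
  define S :: "('c,'r,'i) literal set" where "S = {(True, CAss (RA A) a), (False, CAss (RA B) a)}"
  have cst_a: "is_interp NS J \<Longrightarrow> cst J a = a" for J :: "('c,'r,'i) interp"
    using aN by (simp add: is_interp_def)
  have cs: "clashing_set NS S \<alpha> [a]"
    unfolding clashing_set_def
  proof (intro conjI)
    show "[a] \<in> tuples NS \<alpha>" using aN tup by auto
    show "satisfiable NS S" unfolding satisfiable_def
      using isI AB cI by (auto simp: S_def lit_holds_def I_def intro!: exI[of _ I])
    show "\<not> (\<exists>I. is_interp NS I \<and> (\<forall>l\<in>S. lit_holds NS I l) \<and> inst I \<alpha> [a])"
      using cst_a by (auto simp: S_def lit_holds_def \<alpha>_def)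
  qed
  have jK': "justified_cas NS K' I \<chi>"
    unfolding justified_cas_def
  proof (intro conjI mK' ballI)
    fix p assume "p \<in> \<chi>"
    then have p: "p = (\<alpha>, [a])" by (simp add: \<chi>_def)
    have "\<forall>I'. cas_model NS K' I' \<chi> \<and> cst I' = cst I \<longrightarrow> (\<forall>l\<in>S. lit_holds NS I' l)"
    proof (intro allI impI)
      fix I' assume h: "cas_model NS K' I' \<chi> \<and> cst I' = cst I"
      then have "holds_ax NS I' (CAs (RA A) a)" "holds_ax NS I' (CAs (RNeg (LA B)) a)"
        by (auto simp: cas_model_def K'_def K_def)
      then show "\<forall>l\<in>S. lit_holds NS I' l"
        using h cI by (auto simp: holds_ax_def tup0 S_def lit_holds_def)
    qed
    then show "case p of (\<alpha>, e) \<Rightarrow> \<exists>S. clashing_set NS S \<alpha> e \<and>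
        (\<forall>I'. cas_model NS K' I' \<chi> \<and> cst I' = cst I \<longrightarrow> (\<forall>l\<in>S. lit_holds NS I' l))"
      using cs p by auto
  qed
  have njK: "\<not> justified_cas NS K I \<chi>"
  proof
    assume "justified_cas NS K I \<chi>"
    then obtain S' where S': "clashing_set NS S' \<alpha> [a]"
      "\<forall>I'. cas_model NS K I' \<chi> \<and> cst I' = cst I \<longrightarrow> (\<forall>l\<in>S'. lit_holds NS I' l)"
      unfolding justified_cas_def \<chi>_def by auto
    then have "\<forall>l\<in>S'. lit_holds NS I2 l" using mK2 cI2 by auto
    moreover have "inst I2 \<alpha> [a]" by (simp add: \<alpha>_def I2_def I_def)
    ultimately show False using S'(1) isI2 unfolding clashing_set_def by blast
  qed
  have nin: "Strict (CAs (RNeg (LA B)) a) \<notin> K" by (simp add: K_def)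
  have "finite K'" by (simp add: K'_def K_def)
  moreover have "K \<subset> K'" unfolding K'_def using nin by blast
  ultimately
  show ?thesis using jK' njK by blast
qed

end
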